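(* Let $N=2m+1$ be an odd integer with $N\ge3$. There exist $\varphi,\psi\in\mathbb{C}^N$ such that there is no $c\in\mathbb{C}$ with $|c|=1$ and $\psi=c\varphi$, while for all $k=0,\ldots,2N-3$, $$\Big|P_\varphi\Big(\tfrac{k}{2N-2}\Big)\Big|=\Big|P_\psi\Big(\tfrac{k}{2N-2}\Big)\Big|$$ and $$\Big|P_\varphi\Big(\tfrac{k}{2N-2}\Big)-P_\varphi\Big(\tfrac{k-1}{2N-2}\Big)\Big|=\Big|P_\psi\Big(\tfrac{k}{2N-2}\Big)-P_\psi\Big(\tfrac{k-1}{2N-2}\Big)\Big|.$$
   Context: For $\psi=(\psi_0,\ldots,\psi_{N-1})\in\mathbb{C}^N$, $P_\psi(x)=\sum_{j=0}^{N-1}\psi_je^{2i\pi jx}$ for $x\in\mathbb{R}$ (a $1$-periodic function). *)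

theory Defs
  imports "HOL-Analysis.Analysis"
begin

text \<open>Trigonometric polynomial of a vector psi in C^N, represented as a function
  nat => complex whose entries with index < N are the coordinates.\<close>
definition P :: "nat \<Rightarrow> (nat \<Rightarrow> complex) \<Rightarrow> real \<Rightarrow> complex" where
  "P N psi x = (\<Sum>j<N. psi j * exp (2 * \<i> * of_real pi * of_nat j * of_real x))"

end

theory Submission
  imports Defs
begin

lemma exp_int_real:
  fixes r :: int
  shows "cnj (exp (\<i> * of_real pi * of_int r)) = exp (\<i> * of_real pi * of_int r)"
proof -
  have "exp (\<i> * of_real pi * of_int r) = complex_of_real (cos (pi * of_int r)) + \<i> * complex_of_real (sin (pi * of_int r))"
    using Euler[of "\<i> * of_real pi * of_int r"] by (simp add: mult.commute)
  moreover have "sin (pi * of_int r) = 0"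
    by (metis mult.commute sin_npi_int)
  ultimately show ?thesis by simp
qed

lemma P_form:
  assumes "N \<ge> 3"
  shows "P N (\<lambda>j. (if j = 0 then 1 else 0) + (if j = N - 1 then a else 0)) x
       = 1 + a * exp (2 * \<i> * of_real pi * of_nat (N - 1) * of_real x)"
proof -
  have "P N (\<lambda>j. (if j = 0 then 1 else 0) + (if j = N - 1 then a else 0)) x
    = (\<Sum>j<N. (if j = 0 then exp (2 * \<i> * of_real pi * of_nat j * of_real x) else 0))
    + (\<Sum>j<N. (if j = N - 1 then a * exp (2 * \<i> * of_real pi * of_nat j * of_real x) else 0))"
    unfolding P_def sum.distrib[symmetric] by (rule sum.cong) (use assms in auto)
  also have "\<dots> = 1 + a * exp (2 * \<i> * of_real pi * of_nat (N - 1) * of_real x)"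
    using assms by (auto simp add: sum.delta)
  finally show ?thesis .
qed

lemma key:
  assumes "N \<ge> 3"
  shows "exp (2 * \<i> * of_real pi * of_nat (N - 1) * of_real (of_int r / real (2 * N - 2)))
       = exp (\<i> * of_real pi * of_int r)"
proof -
  have "real (2 * N - 2) = 2 * real (N - 1)" using assms by simp
  moreover have "real (N - 1) \<noteq> 0" using assms by simp
  ultimately have "2 * \<i> * of_real pi * of_nat (N - 1) * of_real (of_int r / real (2 * N - 2))
     = \<i> * of_real pi * of_int r"
    by (simp add: field_simps)
  then show ?thesis by simp
qed

lemma conj_rel:
  assumes "N \<ge> 3"
  shows "P N (\<lambda>j. (if j = 0 then 1 else 0) + (if j = N - 1 then - \<i> else 0)) (of_int r / real (2 * N - 2))
       = cnj (P N (\<lambda>j. (if j = 0 then 1 else 0) + (if j = N - 1 then \<i> else 0)) (of_int r / real (2 * N - 2)))"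
  unfolding P_form[OF assms] key[OF assms]
  by (simp only: complex_cnj_add complex_cnj_mult complex_cnj_one complex_cnj_i exp_int_real)

theorem mainTheorem15:
  fixes N m :: nat
  assumes "N = 2 * m + 1" and "N \<ge> 3"
  shows "\<exists>phi psi :: nat \<Rightarrow> complex.
    (\<not> (\<exists>c::complex. norm c = 1 \<and> (\<forall>j<N. psi j = c * phi j))) \<and>
    (\<forall>k::nat. k \<le> 2 * N - 3 \<longrightarrow>
       norm (P N phi (real k / real (2 * N - 2))) = norm (P N psi (real k / real (2 * N - 2))) \<and>
       norm (P N phi (real k / real (2 * N - 2)) - P N phi ((real k - 1) / real (2 * N - 2)))
       = norm (P N psi (real k / real (2 * N - 2)) - P N psi ((real k - 1) / real (2 * N - 2))))"
proof (intro exI conjI allI impI)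
  let ?phi = "\<lambda>j. (if j = 0 then 1 else 0) + (if j = N - 1 then \<i> else 0) :: complex"
  let ?psi = "\<lambda>j. (if j = 0 then 1 else 0) + (if j = N - 1 then - \<i> else 0) :: complex"
  show "\<not> (\<exists>c::complex. norm c = 1 \<and> (\<forall>j<N. ?psi j = c * ?phi j))"
  proof
    assume "\<exists>c::complex. norm c = 1 \<and> (\<forall>j<N. ?psi j = c * ?phi j)"
    then obtain c where h: "\<forall>j<N. ?psi j = c * ?phi j" by blast
    have "0 < N" using assms by simp
    then have "?psi 0 = c * ?phi 0" using h by (simp only:)
    moreover have "N - 1 \<noteq> 0" using assms by simp
    ultimately have c1: "c = 1" by simp
    have "N - 1 < N" using assms by simp
    then have "?psi (N - 1) = c * ?phi (N - 1)" using h by (simp only:)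
    hence "- \<i> = \<i>" using \<open>N - 1 \<noteq> 0\<close> c1 by simp
    thus False by (simp add: complex_eq_iff)
  qed
  fix k :: nat
  have e1: "P N ?psi (real k / real (2 * N - 2)) = cnj (P N ?phi (real k / real (2 * N - 2)))"
    using conj_rel[OF assms(2), of "int k"] by simp
  have e2: "P N ?psi ((real k - 1) / real (2 * N - 2)) = cnj (P N ?phi ((real k - 1) / real (2 * N - 2)))"
    using conj_rel[OF assms(2), of "int k - 1"] by simp
  show "norm (P N ?phi (real k / real (2 * N - 2))) = norm (P N ?psi (real k / real (2 * N - 2)))"
    by (simp only: e1 complex_mod_cnj)
  show "norm (P N ?phi (real k / real (2 * N - 2)) - P N ?phi ((real k - 1) / real (2 * N - 2)))
       = norm (P N ?psi (real k / real (2 * N - 2)) - P N ?psi ((real k - 1) / real (2 * N - 2)))"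
    by (simp only: e1 e2 complex_cnj_diff[symmetric] complex_mod_cnj)
qed

end
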